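(* Let $S\subset\mathbb{R}^q$ be compact and $\ell:\mathbb{R}^q\times\mathbb{R}^q\to(0,1)$ continuous. Let $s\in S$ and let $(\xi_k)_{k\in\mathbb{N}}\subset\mathbb{R}^q$ be $n$-periodic for some $n\in\mathbb{N}$, i.e. $\xi_{k+n}=\xi_k$ for all $k$. Let $d_1,d_2,\dots\in\{0,1\}$ be independent random variables with $\Pr(d_k=1)=\ell(s,\xi_k)$. Let $c_1,\dots,c_M\in S$ be distinct, let $\hat p_0:\{1,\dots,M\}\to(0,1)$ with $\sum_i\hat p_0(i)=1$, and define $\hat p_k$ by $$\hat p_k(i\mid d_{1:k};\xi_{1:k})=\frac{g(d_k\mid c_i;\xi_k)\,\hat p_{k-1}(i\mid d_{1:k-1};\xi_{1:k-1})}{\sum_{j=1}^M g(d_k\mid c_j;\xi_k)\,\hat p_{k-1}(j\mid d_{1:k-1};\xi_{1:k-1})},$$ where $g(d\mid x;\xi)=\ell(x,\xi)^d(1-\ell(x,\xi))^{1-d}$. Let $$\mathcal{O}=\{i\in\{1,\dots,M\}: \hat p_k(i\mid d_{1:k};\xi_{1:k})\to 0 \text{ almost surely as } k\to\infty\},$$ and for $x\in\mathbb{R}^q$ let $$K(s\|x;\xi_{1:n})=\sum_{k=1}^n\Big[\ell(s,\xi_k)\ln\frac{\ell(s,\xi_k)}{\ell(x,\xi_k)}+(1-\ell(s,\xi_k))\ln\frac{1-\ell(s,\xi_k)}{1-\ell(x,\xi_k)}\Big].$$ Then $$\{1,\dots,M\}\setminus\mathcal{O}\subset\operatorname*{ar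gmin}_{i\in\{1,\dots,M\}}K(s\|c_i;\xi_{1:n}).$$
   Context: $K(s\|x;\xi_{1:n})$ is the Kullback–Leibler divergence between the joint distribution of $n$ independent binary measurements at $\xi_1,\dots,\xi_n$ with source at $s$ and the one with source at $x$. *)

theory Defs
  imports "HOL-Probability.Probability"
begin

definition lik :: "('a \<Rightarrow> 'a \<Rightarrow> real) \<Rightarrow> bool \<Rightarrow> 'a \<Rightarrow> 'a \<Rightarrow> real" where
  "lik L d x \<xi> = (if d then L x \<xi> else 1 - L x \<xi>)"

fun post :: "('a \<Rightarrow> 'a \<Rightarrow> real) \<Rightarrow> (nat \<Rightarrow> 'a) \<Rightarrow> nat \<Rightarrow> (nat \<Rightarrow> real) \<Rightarrow> (nat \<Rightarrow> 'a)
              \<Rightarrow> (nat \<Rightarrow> bool) \<Rightarrow> nat \<Rightarrow> nat \<Rightarrow> real" where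
  "post L c M p0 \<xi> d 0 i = p0 i"
| "post L c M p0 \<xi> d (Suc k) i =
     lik L (d (Suc k)) (c i) (\<xi> (Suc k)) * post L c M p0 \<xi> d k i /
     (\<Sum>j=1..M. lik L (d (Suc k)) (c j) (\<xi> (Suc k)) * post L c M p0 \<xi> d k j)"

definition KL :: "('a \<Rightarrow> 'a \<Rightarrow> real) \<Rightarrow> 'a \<Rightarrow> 'a \<Rightarrow> (nat \<Rightarrow> 'a) \<Rightarrow> nat \<Rightarrow> real" where
  "KL L s x \<xi> n = (\<Sum>k=1..n. L s (\<xi> k) * ln (L s (\<xi> k) / L x (\<xi> k))
        + (1 - L s (\<xi> k)) * ln ((1 - L s (\<xi> k)) / (1 - L x (\<xi> k))))"

end

theory Submission
  imports Defs "HOL-Real_Asymp.Real_Asymp"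
begin


lemma lik_pos: assumes "\<And>x y. 0 < L x y \<and> L x y < 1" shows "0 < lik L b x y"
  using assms[of x y] by (auto simp: lik_def)

lemma post_pos_sum:
  assumes Lp: "\<And>x y. 0 < L x y \<and> L x y < 1"
    and p0: "\<And>i. i \<in> {1..M} \<Longrightarrow> 0 < p0 i" and s1: "(\<Sum>i=1..M. p0 i) = 1"
  shows "(\<forall>l\<in>{1..M}. post L c M p0 \<xi> D k l > 0) \<and> (\<Sum>l=1..M. post L c M p0 \<xi> D k l) = 1"
proof (induction k)
  case 0
  then show ?case using p0 s1 by auto
next
  case (Suc k)
  have M: "M \<ge> 1" using s1 by (cases M) auto
  define S where "S = (\<Sum>j=1..M. lik L (D (Suc k)) (c j) (\<xi> (Suc k)) * post L c M p0 \<xi> D k j)"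
  have "S > 0" unfolding S_def
    by (rule sum_pos) (use M Suc lik_pos[of L, OF Lp] in auto)
  have pos: "\<forall>l\<in>{1..M}. post L c M p0 \<xi> D (Suc k) l > 0"
    using \<open>S > 0\<close> Suc lik_pos[of L, OF Lp] unfolding S_def by (auto intro!: divide_pos_pos)
  have "(\<Sum>l=1..M. post L c M p0 \<xi> D (Suc k) l) = S / S"
    by (simp add: S_def[symmetric] sum_divide_distrib[symmetric]) (simp add: S_def)
  with \<open>S > 0\<close> pos show ?case by simp
qed

lemma post_ratio:
  assumes Lp: "\<And>x y. 0 < L x y \<and> L x y < 1"
  shows "post L c M p0 \<xi> D k i * (p0 j * (\<Prod>m=1..k. lik L (D m) (c j) (\<xi> m)))
       = post L c M p0 \<xi> D k j * (p0 i * (\<Prod>m=1..k. lik L (D m) (c i) (\<xi> m)))"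
proof (induction k)
  case 0
  then show ?case by simp
next
  case (Suc k)
  define S where "S = (\<Sum>j=1..M. lik L (D (Suc k)) (c j) (\<xi> (Suc k)) * post L c M p0 \<xi> D k j)"
  define a where "a = lik L (D (Suc k)) (c i) (\<xi> (Suc k))"
  define b where "b = lik L (D (Suc k)) (c j) (\<xi> (Suc k))"
  have "post L c M p0 \<xi> D (Suc k) i * (p0 j * (\<Prod>m=1..Suc k. lik L (D m) (c j) (\<xi> m)))
     = a * b / S * (post L c M p0 \<xi> D k i * (p0 j * (\<Prod>m=1..k. lik L (D m) (c j) (\<xi> m))))"
    by (simp add: S_def a_def b_def prod.cl_ivl_Suc mult_ac)
  also have "\<dots> = a * b / S * (post L c M p0 \<xi> D k j * (p0 i * (\<Prod>m=1..k. lik L (D m) (c i) (\<xi> m))))"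
    using Suc by simp
  also have "\<dots> = post L c M p0 \<xi> D (Suc k) j * (p0 i * (\<Prod>m=1..Suc k. lik L (D m) (c i) (\<xi> m)))"
    by (simp add: S_def a_def b_def prod.cl_ivl_Suc mult_ac)
  finally show ?case .
qed

lemma periodic_sum:
  fixes e :: "nat \<Rightarrow> real"
  assumes "\<And>m. e (m + n) = e m"
  shows "(\<Sum>m=1..q*n. e m) = q * (\<Sum>m=1..n. e m)"
proof (induction q)
  case 0 then show ?case by simp
next
  case (Suc q)
  have per: "e (m + q*n) = e m" for m
  proof (induction q)
    case (Suc q)
    have "e (m + Suc q * n) = e (m + q*n + n)" by (simp add: algebra_simps)
    then show ?case using Suc assms by simp
  qed simp
  have "(\<Sum>m=1..Suc q*n. e m) = (\<Sum>m=1..q*n + n. e m)" by (simp add: add.commute)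
  also have "\<dots> = (\<Sum>m=1..q*n. e m) + (\<Sum>m=q*n+1..q*n+n. e m)"
    by (rule sum.ub_add_nat) simp
  also have "(\<Sum>m=q*n+1..q*n+n. e m) = (\<Sum>m=1..n. e (m + q*n))"
    using sum.shift_bounds_cl_nat_ivl[of e 1 "q*n" n] by (simp add: add.commute)
  also have "\<dots> = (\<Sum>m=1..n. e m)" using per by simp
  finally show ?case using Suc by (simp add: algebra_simps)
qed



lemma main_conv:
  fixes L :: "'a \<Rightarrow> 'a \<Rightarrow> real"
    and s :: 'a and \<xi> :: "nat \<Rightarrow> 'a" and n :: nat
    and Mp :: "'w measure" and d :: "nat \<Rightarrow> 'w \<Rightarrow> bool"
    and M :: nat and c :: "nat \<Rightarrow> 'a" and p0 :: "nat \<Rightarrow> real"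
  assumes Lp: "\<And>x y. 0 < L x y \<and> L x y < 1"
    and per: "\<And>k. \<xi> (k + n) = \<xi> k"
    and PS: "prob_space Mp"
    and ind: "prob_space.indep_vars Mp (\<lambda>_. count_space UNIV) d {1..}"
    and pr: "\<And>k. k \<ge> 1 \<Longrightarrow> measure Mp {\<omega> \<in> space Mp. d k \<omega>} = L s (\<xi> k)"
    and p0: "\<And>i. i \<in> {1..M} \<Longrightarrow> 0 < p0 i \<and> p0 i < 1"
    and s1: "(\<Sum>i=1..M. p0 i) = 1"
    and i: "i \<in> {1..M}" and j: "j \<in> {1..M}"
    and lt: "KL L s (c j) \<xi> n < KL L s (c i) \<xi> n"
  shows "AE \<omega> in Mp. (\<lambda>k. post L c M p0 \<xi> (\<lambda>k. d k \<omega>) k i) \<longlonglongrightarrow> 0"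
proof -
  interpret prob_space Mp by (rule PS)
  define \<delta> where "\<delta> = KL L s (c i) \<xi> n - KL L s (c j) \<xi> n"
  have \<delta>: "\<delta> > 0" using lt by (simp add: \<delta>_def)
  have n: "n > 0" using lt by (cases n) (auto simp: KL_def)
  have perm: "\<xi> m = \<xi> (m mod n)" for m
  proof -
    have "\<xi> (r + q * n) = \<xi> r" for r q
    proof (induction q)
      case (Suc q)
      have "\<xi> (r + Suc q * n) = \<xi> (r + q*n + n)" by (simp add: algebra_simps)
      then show ?case using Suc per by simp
    qed simp
    from this[of "m mod n" "m div n"] show ?thesis by simp
  qed
  define f where "f m b = ln (lik L b (c i) (\<xi> m)) - ln (lik L b (c j) (\<xi> m))" for m b
  define Z where "Z m \<omega> = f m (d m \<omega>)" for m \<omega>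
  define lv where "lv m = L s (\<xi> m)" for m
  define B where "B = 1 + (\<Sum>r<n. \<bar>f r True\<bar> + \<bar>f r False\<bar>)"
  have fper: "f m b = f (m mod n) b" for m b unfolding f_def using perm[of m] by simp
  have fB: "\<bar>f m b\<bar> \<le> B" for m b
  proof -
    have "\<bar>f (m mod n) b\<bar> \<le> \<bar>f (m mod n) True\<bar> + \<bar>f (m mod n) False\<bar>" by (cases b) auto
    also have "\<dots> \<le> (\<Sum>r<n. \<bar>f r True\<bar> + \<bar>f r False\<bar>)"
      by (rule member_le_sum[of "m mod n" "{..<n}" "\<lambda>r. \<bar>f r True\<bar> + \<bar>f r False\<bar>"]) (use n in auto)
    finally show ?thesis using fper[of m b] by (simp add: B_def)
  qed
  have B1: "B \<ge> 1" unfolding B_def by (simp add: sum_nonneg)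
  have rv: "d m \<in> measurable Mp (count_space UNIV)" if "m \<ge> 1" for m
    using ind that unfolding indep_vars_def by auto
  have Zm[measurable]: "Z m \<in> borel_measurable Mp" if "m \<ge> 1" for m
    unfolding Z_def using measurable_compose[OF rv[OF that], of "f m" borel] by auto
  have setd: "{\<omega>\<in>space Mp. d m \<omega>} \<in> sets Mp" if "m \<ge> 1" for m
  proof -
    have "{\<omega>\<in>space Mp. d m \<omega>} = d m -` {True} \<inter> space Mp" by auto
    then show ?thesis using measurable_sets[OF rv[OF that], of "{True}"] by simp
  qed
  define e where "e m = lv m * f m True + (1 - lv m) * f m False" for m
  have EZ: "expectation (Z m) = e m" if "m \<ge> 1" for m
  proof -
    define A where "A = {\<omega>\<in>space Mp. d m \<omega>}"
    have A: "A \<in> sets Mp" using setd[OF that] by (simp add: A_def)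
    have "expectation (Z m) = expectation (\<lambda>\<omega>. f m False + (f m True - f m False) * indicator A \<omega>)"
      by (rule Bochner_Integration.integral_cong) (auto simp: Z_def indicator_def A_def)
    also have "\<dots> = f m False + (f m True - f m False) * prob A"
      using A by (subst Bochner_Integration.integral_add) (auto simp: prob_space integrable_real_indicator emeasure_eq_measure)
    also have "prob A = lv m" using pr[OF that] by (simp add: A_def lv_def)
    finally show ?thesis by (simp add: e_def algebra_simps)
  qed
  have eper: "e (m + n) = e m" for m
    unfolding e_def f_def lv_def using per[of m] by simp
  have eB: "e m \<le> B" for m
  proof -
    have l: "0 < lv m" "lv m < 1" using Lp by (auto simp: lv_def)
    have "lv m * f m True \<le> lv m * B" using fB[of m True] l by (intro mult_left_mono) auto
    moreover have "(1 - lv m) * f m False \<le> (1 - lv m) * B" using fB[of m False] l by (intro mult_left_mono) auto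
    ultimately show ?thesis by (simp add: e_def algebra_simps)
  qed
  have esum: "(\<Sum>m=1..n. e m) = - \<delta>"
  proof -
    have "e m = (L s (\<xi> m) * ln (L s (\<xi> m) / L (c j) (\<xi> m))
        + (1 - L s (\<xi> m)) * ln ((1 - L s (\<xi> m)) / (1 - L (c j) (\<xi> m))))
        - (L s (\<xi> m) * ln (L s (\<xi> m) / L (c i) (\<xi> m))
        + (1 - L s (\<xi> m)) * ln ((1 - L s (\<xi> m)) / (1 - L (c i) (\<xi> m))))" for m
    proof -
      have p: "0 < L x y" "0 < 1 - L x y" for x y using Lp[of x y] by auto
      have q1: "ln (L x y / L x' y') = ln (L x y) - ln (L x' y')" for x y x' y'
        using p by (intro ln_divide_pos) auto
      have q2: "ln ((1 - L x y) / (1 - L x' y')) = ln (1 - L x y) - ln (1 - L x' y')" for x y x' y'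
        using p by (intro ln_divide_pos) auto
      show ?thesis unfolding e_def f_def lv_def lik_def q1 q2
        by (simp add: algebra_simps)
    qed
    then show ?thesis unfolding \<delta>_def KL_def by (simp add: sum_subtractf)
  qed
  define \<epsilon> where "\<epsilon> = \<delta> / (2 * n)"
  have \<epsilon>: "\<epsilon> > 0" using \<delta> n by (simp add: \<epsilon>_def)
  define A where "A k = {\<omega>\<in>space Mp. (\<Sum>m\<in>{1..k}. Z m \<omega>) \<ge> (\<Sum>m\<in>{1..k}. e m) + \<epsilon> * k}" for k
  define cc where "cc = \<epsilon>\<^sup>2 / (2 * B\<^sup>2)"
  have cc: "cc > 0" using \<epsilon> B1 by (simp add: cc_def)
  have Asets: "A k \<in> sets Mp" for k
  proof -
    have [measurable]: "(\<lambda>\<omega>. \<Sum>m\<in>{1..k}. Z m \<omega>) \<in> borel_measurable Mp"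
      by (rule borel_measurable_sum) auto
    show ?thesis unfolding A_def by measurable
  qed
  have Hk: "prob (A k) \<le> exp (- cc) ^ k" if k: "k \<ge> 1" for k
  proof -
    interpret H: Hoeffding_ineq Mp "{1..k}" Z "\<lambda>_. -B" "\<lambda>_. B" "\<Sum>m\<in>{1..k}. e m"
    proof unfold_locales
      show "finite {1..k}" by simp
      show "indep_vars (\<lambda>_. borel) Z {1..k}"
        unfolding Z_def
        by (rule indep_vars_compose2[OF indep_vars_subset[OF ind]]) auto
      show "AE x in Mp. Z m x \<in> {- B..B}" if "m \<in> {1..k}" for m
      proof (rule AE_I2)
        fix x show "Z m x \<in> {- B..B}" using fB[of m "d m x"] by (simp add: Z_def abs_le_iff)
      qed
      show "(\<Sum>m\<in>{1..k}. e m) \<equiv> (\<Sum>m\<in>{1..k}. expectation (Z m))"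
        using EZ by simp
    qed
    have pos: "(\<Sum>m\<in>{1..k}. (B - - B)\<^sup>2) > 0" using k B1 by simp
    have "prob (A k) \<le> exp (-2 * (\<epsilon> * k)\<^sup>2 / (\<Sum>m\<in>{1..k}. (B - - B)\<^sup>2))"
      using H.Hoeffding_ineq_ge[OF _ pos, of "\<epsilon> * k"] \<epsilon> unfolding A_def by simp
    also have "-2 * (\<epsilon> * k)\<^sup>2 / (\<Sum>m\<in>{1..k}. (B - - B)\<^sup>2) = real k * (- cc)"
      using k B1 by (simp add: cc_def power2_eq_square field_simps)
    also have "exp (real k * (- cc)) = exp (- cc) ^ k" by (rule exp_of_nat_mult)
    finally show ?thesis .
  qed
  have summ: "summable (\<lambda>k. measure Mp (A k))"
    by (rule summable_comparison_test'[where N=1, OF summable_geometric[of "exp (- cc)"]])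
       (use cc Hk in auto)
  have AEev: "AE \<omega> in Mp. eventually (\<lambda>k. \<omega> \<in> space Mp - A k) sequentially"
    by (rule borel_cantelli_AE1) (use Asets summ in \<open>auto simp: emeasure_eq_measure\<close>)
  have mu: "(\<Sum>m\<in>{1..k}. e m) + \<epsilon> * k \<le> (\<delta> + n * B) - \<epsilon> * k" for k
  proof -
    define q where "q = k div n"
    define r where "r = k mod n"
    have kq: "k = q * n + r" by (simp add: q_def r_def)
    have rn: "r < n" using n by (simp add: r_def)
    have "(\<Sum>m\<in>{1..k}. e m) = (\<Sum>m=1..q*n. e m) + (\<Sum>m=q*n+1..q*n+r. e m)"
      unfolding kq by (rule sum.ub_add_nat) simp
    also have "(\<Sum>m=1..q*n. e m) = - q * \<delta>" using periodic_sum[of e n q, OF eper] esum by simp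
    also have "(\<Sum>m=q*n+1..q*n+r. e m) \<le> real (card {q*n+1..q*n+r}) * B"
      by (rule sum_bounded_above) (use eB in auto)
    also have "real (card {q*n+1..q*n+r}) * B \<le> n * B" using rn B1 by simp
    finally have 1: "(\<Sum>m\<in>{1..k}. e m) \<le> - q * \<delta> + n * B" by simp
    have "real k < (real q + 1) * n" using kq rn by (simp add: algebra_simps)
    then have "real k / n - 1 < real q" using n by (simp add: field_simps)
    then have "- q * \<delta> \<le> - (real k / n - 1) * \<delta>" using \<delta> by (intro mult_right_mono) auto
    also have "- (real k / n - 1) * \<delta> = \<delta> - 2 * \<epsilon> * k" using n by (simp add: \<epsilon>_def field_simps)
    finally show ?thesis using 1 by simp
  qed
  show ?thesis
    using AEev AE_space
  proof eventually_elim
    case (elim \<omega>)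
    define D where "D = (\<lambda>k. d k \<omega>)"
    have bd: "post L c M p0 \<xi> D k i \<le> p0 i / p0 j * exp ((\<delta> + n * B) - \<epsilon> * k)"
      if "\<omega> \<in> space Mp - A k" for k
    proof -
      have S: "(\<Sum>m\<in>{1..k}. Z m \<omega>) \<le> (\<delta> + n * B) - \<epsilon> * k"
        using that mu[of k] by (auto simp: A_def)
      have PS: "\<forall>l\<in>{1..M}. post L c M p0 \<xi> D k l > 0" "(\<Sum>l=1..M. post L c M p0 \<xi> D k l) = 1"
        using post_pos_sum[of L M p0 c \<xi> D k] Lp p0 s1 by auto
      have pj1: "post L c M p0 \<xi> D k j \<le> 1"
        using member_le_sum[of j "{1..M}" "post L c M p0 \<xi> D k"] PS j by (auto simp: less_imp_le)
      have lp: "0 < lik L b x y" for b x y using lik_pos[of L, OF Lp] .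
      define Pi where "Pi = (\<Prod>m=1..k. lik L (D m) (c i) (\<xi> m))"
      define Pj where "Pj = (\<Prod>m=1..k. lik L (D m) (c j) (\<xi> m))"
      have Pi: "Pi > 0" "Pj > 0" unfolding Pi_def Pj_def by (auto intro!: prod_pos lp)
      have ex: "exp (\<Sum>m\<in>{1..k}. Z m \<omega>) = Pi / Pj"
        unfolding Pi_def Pj_def Z_def f_def D_def
        by (simp add: exp_sum exp_diff lp prod_dividef)
      have rat: "post L c M p0 \<xi> D k i * (p0 j * Pj) = post L c M p0 \<xi> D k j * (p0 i * Pi)"
        unfolding Pi_def Pj_def by (rule post_ratio[OF Lp])
      have p0p: "p0 i > 0" "p0 j > 0" using p0 i j by auto
      have "post L c M p0 \<xi> D k i = post L c M p0 \<xi> D k j * (p0 i * Pi) / (p0 j * Pj)"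
        using rat Pi p0p by (simp add: field_simps)
      also have "\<dots> \<le> 1 * (p0 i * Pi) / (p0 j * Pj)"
        using pj1 Pi p0p by (intro divide_right_mono mult_right_mono) auto
      also have "\<dots> = p0 i / p0 j * exp (\<Sum>m\<in>{1..k}. Z m \<omega>)" using ex Pi p0p by simp
      also have "\<dots> \<le> p0 i / p0 j * exp ((\<delta> + n * B) - \<epsilon> * k)"
        using S p0p by (intro mult_left_mono) auto
      finally show ?thesis .
    qed
    have nn: "post L c M p0 \<xi> D k i \<ge> 0" for k
      using post_pos_sum[of L M p0 c \<xi> D k] Lp p0 s1 i by (auto simp: less_imp_le)
    have lim: "(\<lambda>k. p0 i / p0 j * exp ((\<delta> + n * B) - \<epsilon> * k)) \<longlonglongrightarrow> 0"
      using \<epsilon> by real_asymp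
    have ev: "eventually (\<lambda>k. post L c M p0 \<xi> D k i \<le> p0 i / p0 j * exp ((\<delta> + n * B) - \<epsilon> * k)) sequentially"
      using elim(1) by (rule eventually_mono) (rule bd)
    have "(\<lambda>k. post L c M p0 \<xi> D k i) \<longlonglongrightarrow> 0"
      by (rule tendsto_sandwich[OF _ ev tendsto_const lim]) (use nn in simp)
    then show ?case by (simp add: D_def)
  qed
qed



theorem theorem4:
  fixes S :: "'a::euclidean_space set"
    and L :: "'a \<Rightarrow> 'a \<Rightarrow> real"
    and s :: 'a and \<xi> :: "nat \<Rightarrow> 'a" and n :: nat
    and Mp :: "'w measure" and d :: "nat \<Rightarrow> 'w \<Rightarrow> bool"
    and M :: nat and c :: "nat \<Rightarrow> 'a" and p0 :: "nat \<Rightarrow> real"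
  assumes "compact S"
    and "continuous_on UNIV (\<lambda>(x, y). L x y)"
    and "\<And>x y. 0 < L x y \<and> L x y < 1"
    and "s \<in> S"
    and "\<And>k. \<xi> (k + n) = \<xi> k"
    and "prob_space Mp"
    and "prob_space.indep_vars Mp (\<lambda>_. count_space UNIV) d {1..}"
    and "\<And>k. k \<ge> 1 \<Longrightarrow> measure Mp {\<omega> \<in> space Mp. d k \<omega>} = L s (\<xi> k)"
    and "inj_on c {1..M}"
    and "\<And>i. i \<in> {1..M} \<Longrightarrow> c i \<in> S"
    and "\<And>i. i \<in> {1..M} \<Longrightarrow> 0 < p0 i \<and> p0 i < 1"
    and "(\<Sum>i=1..M. p0 i) = 1"
  shows "{1..M} - {i \<in> {1..M}. AE \<omega> in Mp.
             (\<lambda>k. post L c M p0 \<xi> (\<lambda>k. d k \<omega>) k i) \<longlonglongrightarrow> 0}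
         \<subseteq> {i \<in> {1..M}. \<forall>j \<in> {1..M}. KL L s (c i) \<xi> n \<le> KL L s (c j) \<xi> n}"
  proof
  fix i assume iO: "i \<in> {1..M} - {i \<in> {1..M}. AE \<omega> in Mp.
             (\<lambda>k. post L c M p0 \<xi> (\<lambda>k. d k \<omega>) k i) \<longlonglongrightarrow> 0}"
  then have i: "i \<in> {1..M}" by simp
  show "i \<in> {i \<in> {1..M}. \<forall>j \<in> {1..M}. KL L s (c i) \<xi> n \<le> KL L s (c j) \<xi> n}"
  proof (rule ccontr)
    assume "\<not> ?thesis"
    then obtain j where j: "j \<in> {1..M}" and lt: "KL L s (c j) \<xi> n < KL L s (c i) \<xi> n"
      using i by (auto simp: not_le)
    have "AE \<omega> in Mp. (\<lambda>k. post L c M p0 \<xi> (\<lambda>k. d k \<omega>) k i) \<longlonglongrightarrow> 0"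
      by (rule main_conv[OF assms(3,5,6,7,8,11,12) i j lt])
    then show False using iO i by blast
  qed
qed

end
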